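(* Let $\mathcal{G}$ be an unambiguous weighted context-free grammar with positive weight vector $\omega$, generating $\mathcal{L}$, and let $n\ge0$. Let $P_{n,\omega,k}\in[0,1]$ be the total probability (under the $\omega$-weighted distribution on $\mathcal{L}_n$) of the set of distinct words obtained after $k$ independent draws from that distribution. Then \[ E[P_{n,\omega,k}]=\sum_{i=1}^{|\mathbf{W}_n|} M_{n,i}\,\frac{W_{n,i}}{Z_\omega(n)}\left(1-\left(1-\frac{W_{n,i}}{Z_\omega(n)}\right)^k\right). \] Moreover, if Condition C1 holds, then there exists $\beta>1$ such that for any $k\in o(\beta^n)$, \[ E[P_{n,\omega,k}]=k\,\alpha_{2,n}\left(1+O(\beta^{-n})\right). \]
   Context: A weighted context-free grammar is an unambiguous context-free grammar with terminal alphabet $\Sigma$ and positive weights $\omega=(\omega_t)_{t\in\Sigma}$; $\mathcal{L}_n$ is the set of generated words of length $n$. The weight $\omega(w)$ of a word is the product of its letters' weights (with multiplicity); $Z_\omega(n)=\sum_{w\in\mathcal{L}_n}\omega(w)$, and the $\omega$-weighted distribution gives $w$ probability $\omega(w)/Z_\omega(n)$. $\mathbf{W}_n=(W_{n,1}<W_{n,2}<\dots)$ is the increasingly ordered vector of distinct weights of words in $\mathcal{L}_n$ and $M_{n,i}$ the number of words of weight $W_{n,i}$. $\alpha_{2,n}=\sum_{w\in\mathcal{L}_n}(\omega(w)/Z_\omega(n))^2$. Condition C1: there exists $\beta>1$ such that $\max_{w\in\mathcal{L}_n}\omega(w)/Z_\omega(n)\in O(\beta^{-n})$. *)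

theory Defs
  imports "HOL-Probability.Probability" "HOL-Library.Landau_Symbols"
begin

datatype ('n, 't) ptree = Leaf 't | Node 'n "('n, 't) ptree list"

fun proot :: "('n, 't) ptree \<Rightarrow> 'n + 't" where
  "proot (Leaf t) = Inr t"
| "proot (Node A ts) = Inl A"

fun pyield :: "('n, 't) ptree \<Rightarrow> 't list" where
  "pyield (Leaf t) = [t]"
| "pyield (Node A ts) = concat (map pyield ts)"

inductive valid_tree :: "('n \<times> ('n + 't) list) set \<Rightarrow> ('n, 't) ptree \<Rightarrow> bool"
  for P :: "('n \<times> ('n + 't) list) set" where
  leaf: "valid_tree P (Leaf t)"
| node: "(A, map proot ts) \<in> P \<Longrightarrow> (\<forall>t\<in>set ts. valid_tree P t) \<Longrightarrow> valid_tree P (Node A ts)"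

definition parse_tree :: "('n \<times> ('n + 't) list) set \<Rightarrow> 'n \<Rightarrow> ('n, 't) ptree \<Rightarrow> bool" where
  "parse_tree P S t \<longleftrightarrow> valid_tree P t \<and> proot t = Inl S"

definition cfg_language :: "('n \<times> ('n + 't) list) set \<Rightarrow> 'n \<Rightarrow> 't list set" where
  "cfg_language P S = {pyield t | t. parse_tree P S t}"

definition unambiguous :: "('n \<times> ('n + 't) list) set \<Rightarrow> 'n \<Rightarrow> bool" where
  "unambiguous P S \<longleftrightarrow>
     (\<forall>t1 t2. parse_tree P S t1 \<and> parse_tree P S t2 \<and> pyield t1 = pyield t2 \<longrightarrow> t1 = t2)"

definition word_weight :: "('t \<Rightarrow> real) \<Rightarrow> 't list \<Rightarrow> real" where
  "word_weight \<omega> w = prod_list (map \<omega> w)"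

definition Ln :: "'t list set \<Rightarrow> nat \<Rightarrow> 't list set" where
  "Ln L n = {w \<in> L. length w = n}"

definition Zw :: "'t list set \<Rightarrow> ('t \<Rightarrow> real) \<Rightarrow> nat \<Rightarrow> real" where
  "Zw L \<omega> n = (\<Sum>w\<in>Ln L n. word_weight \<omega> w)"

text \<open>The \<omega>-weighted distribution on L_n (meaningful when L_n is nonempty).\<close>
definition wdist :: "'t list set \<Rightarrow> ('t \<Rightarrow> real) \<Rightarrow> nat \<Rightarrow> 't list pmf" where
  "wdist L \<omega> n = embed_pmf (\<lambda>w. if w \<in> Ln L n then word_weight \<omega> w / Zw L \<omega> n else 0)"

text \<open>Increasingly ordered vector of distinct weights (1-based indexing) and multiplicities.\<close>
definition Wvec :: "'t list set \<Rightarrow> ('t \<Rightarrow> real) \<Rightarrow> nat \<Rightarrow> real list" where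
  "Wvec L \<omega> n = sorted_list_of_set (word_weight \<omega> ` Ln L n)"

definition Wn :: "'t list set \<Rightarrow> ('t \<Rightarrow> real) \<Rightarrow> nat \<Rightarrow> nat \<Rightarrow> real" where
  "Wn L \<omega> n i = Wvec L \<omega> n ! (i - 1)"

definition Mn :: "'t list set \<Rightarrow> ('t \<Rightarrow> real) \<Rightarrow> nat \<Rightarrow> nat \<Rightarrow> nat" where
  "Mn L \<omega> n i = card {w \<in> Ln L n. word_weight \<omega> w = Wn L \<omega> n i}"

definition alpha2 :: "'t list set \<Rightarrow> ('t \<Rightarrow> real) \<Rightarrow> nat \<Rightarrow> real" where
  "alpha2 L \<omega> n = (\<Sum>w\<in>Ln L n. (word_weight \<omega> w / Zw L \<omega> n) ^ 2)"

definition covered_prob :: "'t list set \<Rightarrow> ('t \<Rightarrow> real) \<Rightarrow> nat \<Rightarrow> 't list list \<Rightarrow> real" where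
  "covered_prob L \<omega> n ws = (\<Sum>w\<in>set ws. pmf (wdist L \<omega> n) w)"

definition expected_covered :: "'t list set \<Rightarrow> ('t \<Rightarrow> real) \<Rightarrow> nat \<Rightarrow> nat \<Rightarrow> real" where
  "expected_covered L \<omega> n k =
     measure_pmf.expectation (replicate_pmf k (wdist L \<omega> n)) (covered_prob L \<omega> n)"

text \<open>Asymptotics in n are taken along the lengths n for which L_n is nonempty
  (the only n for which the distribution is defined).\<close>
definition nonempty_lengths :: "'t list set \<Rightarrow> nat filter" where
  "nonempty_lengths L = inf at_top (principal {n. Ln L n \<noteq> {}})"

definition max_prob :: "'t list set \<Rightarrow> ('t \<Rightarrow> real) \<Rightarrow> nat \<Rightarrow> real" where
  "max_prob L \<omega> n = Max ((\<lambda>w. word_weight \<omega> w / Zw L \<omega> n) ` Ln L n)"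

definition condition_C1 :: "'t list set \<Rightarrow> ('t \<Rightarrow> real) \<Rightarrow> bool" where
  "condition_C1 L \<omega> \<longleftrightarrow>
     (\<exists>\<beta>::real. \<beta> > 1 \<and>
        (\<lambda>n. max_prob L \<omega> n) \<in> O[nonempty_lengths L](\<lambda>n. inverse \<beta> ^ n))"

end

theory Submission imports Defs begin

lemma rep_notin:
  "measure (measure_pmf (replicate_pmf k q)) {ws. w \<notin> set ws} = (1 - pmf q w)^k"
proof (induction k)
  case 0
  show ?case by simp
next
  case (Suc k)
  define A where "A = {ws. w \<notin> set ws}"
  have r: "replicate_pmf (Suc k) q = bind_pmf q (\<lambda>x. map_pmf ((#) x) (replicate_pmf k q))"
    by (simp add: map_pmf_def)
  have pre: "(#) x -` A = (if x = w then {} else A)" for x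
    by (auto simp: A_def)
  have "emeasure (measure_pmf (replicate_pmf (Suc k) q)) A
      = (\<integral>\<^sup>+x. ennreal ((1 - pmf q w)^k) * indicator (-{w}) x \<partial>measure_pmf q)"
    unfolding r emeasure_bind_pmf emeasure_map_pmf
    by (intro nn_integral_cong) (use Suc in \<open>auto simp: pre measure_pmf.emeasure_eq_measure A_def[symmetric] split: split_indicator\<close>)
  also have "\<dots> = ennreal ((1 - pmf q w)^k) * emeasure (measure_pmf q) (-{w})"
    by (simp add: nn_integral_cmult_indicator)
  also have "emeasure (measure_pmf q) (-{w}) = ennreal (1 - pmf q w)"
    using measure_pmf.prob_compl[of "{w}" q]
    by (simp add: measure_pmf.emeasure_eq_measure measure_pmf_single Compl_eq_Diff_UNIV)
  also have "ennreal ((1 - pmf q w)^k) * ennreal (1 - pmf q w) = ennreal ((1 - pmf q w)^Suc k)"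
    by (simp add: ennreal_mult' pmf_le_1 mult.commute)
  finally show ?case
    by (simp add: measure_pmf.emeasure_eq_measure A_def pmf_le_1)
qed

lemma rep_in:
  "measure (measure_pmf (replicate_pmf k q)) {ws. w \<in> set ws} = 1 - (1 - pmf q w)^k"
proof -
  have "{ws. w \<in> set ws} = UNIV - {ws. w \<notin> set ws}" by auto
  then show ?thesis
    using measure_pmf.prob_compl[of "{ws. w \<notin> set ws}" "replicate_pmf k q"] rep_notin[of k q w]
    by simp
qed

lemma expect_cov:
  fixes q :: "'a pmf"
  assumes F: "finite F" and z: "\<And>w. w \<notin> F \<Longrightarrow> pmf q w = 0"
  shows "measure_pmf.expectation (replicate_pmf k q) (\<lambda>ws. \<Sum>w\<in>set ws. pmf q w)
       = (\<Sum>w\<in>F. pmf q w * (1 - (1 - pmf q w)^k))"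
proof -
  have eq: "(\<Sum>w\<in>set ws. pmf q w) = (\<Sum>w\<in>F. pmf q w * indicator {ws. w \<in> set ws} ws)" for ws
  proof -
    have "(\<Sum>w\<in>set ws. pmf q w) = (\<Sum>w\<in>set ws \<inter> F. pmf q w)"
      by (rule sum.mono_neutral_right) (use z in auto)
    also have "\<dots> = (\<Sum>w\<in>F. pmf q w * indicator {ws. w \<in> set ws} ws)"
      using F by (simp add: sum.inter_restrict indicator_def of_bool_def if_distrib Int_commute cong: if_cong)
    finally show ?thesis .
  qed
  have "measure_pmf.expectation (replicate_pmf k q) (\<lambda>ws. \<Sum>w\<in>set ws. pmf q w)
      = measure_pmf.expectation (replicate_pmf k q) (\<lambda>ws. \<Sum>w\<in>F. pmf q w * indicator {ws. w \<in> set ws} ws)"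
    by (simp add: eq)
  also have "\<dots> = (\<Sum>w\<in>F. measure_pmf.expectation (replicate_pmf k q) (\<lambda>ws. pmf q w * indicator {ws. w \<in> set ws} ws))"
    by (rule Bochner_Integration.integral_sum) (simp add: measure_pmf.integrable_const_bound[where B=1])
  also have "\<dots> = (\<Sum>w\<in>F. pmf q w * (1 - (1 - pmf q w)^k))"
    by (simp add: rep_in)
  finally show ?thesis .
qed

lemma ww_pos:
  assumes "\<And>t. \<omega> t > (0::real)"
  shows "word_weight \<omega> w > 0"
  unfolding word_weight_def using assms by (induction w) auto

lemma fin_Ln: "finite (Ln (L :: ('t::finite) list set) n)"
proof -
  have "Ln L n \<subseteq> {xs. set xs \<subseteq> UNIV \<and> length xs = n}" by (auto simp: Ln_def)
  moreover have "finite {xs. set xs \<subseteq> (UNIV::'t set) \<and> length xs = n}"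
    by (rule finite_lists_length_eq) simp
  ultimately show ?thesis by (rule finite_subset)
qed

lemma Z_pos:
  assumes "finite (Ln L n)" "Ln L n \<noteq> {}" "\<And>t. \<omega> t > (0::real)"
  shows "Zw L \<omega> n > 0"
proof -
  have "\<And>w. word_weight \<omega> w > 0" using ww_pos[of \<omega>] assms(3) by blast
  then show ?thesis unfolding Zw_def by (intro sum_pos) (use assms in auto)
qed

lemma ww_le_Z:
  assumes "finite (Ln L n)" "w \<in> Ln L n" "\<And>t. \<omega> t > (0::real)"
  shows "word_weight \<omega> w \<le> Zw L \<omega> n"
proof -
  have "\<And>w. word_weight \<omega> w > 0" using ww_pos[of \<omega>] assms(3) by blast
  then show ?thesis
  unfolding Zw_def by (intro member_le_sum) (use assms less_imp_le in auto)
qed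

lemma pmf_wdist:
  assumes fin: "finite (Ln L n)" and ne: "Ln L n \<noteq> {}" and pos: "\<And>t. \<omega> t > (0::real)"
  shows "pmf (wdist L \<omega> n) w = (if w \<in> Ln L n then word_weight \<omega> w / Zw L \<omega> n else 0)"
proof -
  define f where "f = (\<lambda>w. if w \<in> Ln L n then word_weight \<omega> w / Zw L \<omega> n else 0)"
  have Zp: "Zw L \<omega> n > 0" using Z_pos[OF fin ne pos] .
  have wp: "\<And>w. word_weight \<omega> w > 0" using ww_pos[of \<omega>] pos by blast
  have nn: "\<And>w. f w \<ge> 0" unfolding f_def using wp Zp
    by (auto intro: divide_nonneg_pos less_imp_le)
  have "(\<integral>\<^sup>+x. ennreal (f x) \<partial>count_space UNIV)
      = (\<integral>\<^sup>+x. ennreal (f x) * indicator (Ln L n) x \<partial>count_space UNIV)"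
    by (intro nn_integral_cong) (auto simp: indicator_def f_def)
  also have "\<dots> = (\<integral>\<^sup>+x. ennreal (f x) \<partial>count_space (Ln L n))"
    by (simp add: nn_integral_count_space_indicator)
  also have "\<dots> = (\<Sum>x\<in>Ln L n. ennreal (f x))"
    by (rule nn_integral_count_space_finite[OF fin])
  also have "\<dots> = ennreal (\<Sum>x\<in>Ln L n. f x)"
    by (rule sum_ennreal) (use nn in auto)
  also have "(\<Sum>x\<in>Ln L n. f x) = (\<Sum>x\<in>Ln L n. word_weight \<omega> x) / Zw L \<omega> n"
    unfolding f_def by (simp add: sum_divide_distrib)
  also have "\<dots> = 1" using Zp by (simp add: Zw_def)
  finally have prob: "(\<integral>\<^sup>+x. ennreal (f x) \<partial>count_space UNIV) = 1" by simp
  have "pmf (embed_pmf f) w = f w"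
    by (rule pmf_embed_pmf) (use nn prob in auto)
  then show ?thesis by (simp add: wdist_def f_def)
qed

lemma expected_formula:
  fixes L :: "('t::finite) list set"
  assumes ne: "Ln L n \<noteq> {}" and pos: "\<And>t. \<omega> t > (0::real)"
  shows "expected_covered L \<omega> n k
     = (\<Sum>w\<in>Ln L n. (word_weight \<omega> w / Zw L \<omega> n) * (1 - (1 - word_weight \<omega> w / Zw L \<omega> n)^k))"
proof -
  have fin: "finite (Ln L n)" by (rule fin_Ln)
  have "expected_covered L \<omega> n k
      = (\<Sum>w\<in>Ln L n. pmf (wdist L \<omega> n) w * (1 - (1 - pmf (wdist L \<omega> n) w)^k))"
    unfolding expected_covered_def covered_prob_def
    by (rule expect_cov[OF fin]) (simp add: pmf_wdist[OF fin ne pos])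
  also have "\<dots> = (\<Sum>w\<in>Ln L n. (word_weight \<omega> w / Zw L \<omega> n) * (1 - (1 - word_weight \<omega> w / Zw L \<omega> n)^k))"
    by (rule sum.cong) (simp_all add: pmf_wdist[OF fin ne pos])
  finally show ?thesis .
qed

lemma grouping:
  fixes L :: "('t::finite) list set"
  assumes ne: "Ln L n \<noteq> {}" and pos: "\<And>t. \<omega> t > (0::real)"
  shows "(\<Sum>w\<in>Ln L n. (word_weight \<omega> w / Zw L \<omega> n) * (1 - (1 - word_weight \<omega> w / Zw L \<omega> n)^k))
    = (\<Sum>i = 1..length (Wvec L \<omega> n).
                 real (Mn L \<omega> n i) * (Wn L \<omega> n i / Zw L \<omega> n) *
                 (1 - (1 - Wn L \<omega> n i / Zw L \<omega> n) ^ k))"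
proof -
  have fin: "finite (Ln L n)" by (rule fin_Ln)
  define Z where "Z = Zw L \<omega> n"
  define g where "g = (\<lambda>v. (v / Z) * (1 - (1 - v / Z)^k))"
  define h where "h = (\<lambda>v. real (card {w \<in> Ln L n. word_weight \<omega> w = v}) * g v)"
  define xs where "xs = Wvec L \<omega> n"
  have setxs: "set xs = word_weight \<omega> ` Ln L n" and dxs: "distinct xs"
    using fin by (simp_all add: xs_def Wvec_def)
  have "(\<Sum>w\<in>Ln L n. g (word_weight \<omega> w))
      = (\<Sum>v\<in>word_weight \<omega> ` Ln L n. \<Sum>w\<in>{x \<in> Ln L n. word_weight \<omega> x = v}. g (word_weight \<omega> w))"
    by (rule sum.image_gen[OF fin])
  also have "\<dots> = (\<Sum>v\<in>word_weight \<omega> ` Ln L n. h v)"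
    by (rule sum.cong) (simp_all add: h_def)
  also have "\<dots> = sum_list (map h xs)"
    using dxs setxs by (simp add: sum_list_distinct_conv_sum_set)
  also have "\<dots> = (\<Sum>i<length xs. h (xs ! i))"
    by (simp add: sum_list_sum_nth atLeast0LessThan)
  also have "\<dots> = (\<Sum>i = 1..length xs. h (xs ! (i - 1)))"
  proof -
    have "{1..length xs} = Suc ` {..<length xs}"
      by (simp add: image_Suc_lessThan)
    then show ?thesis by (simp add: sum.reindex)
  qed
  finally show ?thesis
    unfolding g_def h_def Z_def xs_def Mn_def Wn_def by (simp add: mult.assoc)
qed

lemma bern2:
  fixes p :: real
  assumes "0 \<le> p" "p \<le> 1"
  shows "0 \<le> real k * p - (1 - (1 - p)^k) \<and> real k * p - (1 - (1 - p)^k) \<le> (real k)^2 * p^2"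
proof (induction k)
  case 0 then show ?case by simp
next
  case (Suc k)
  have b1: "(1 - p)^k \<le> 1" using assms by (intro power_le_one) auto
  have b2: "1 - real k * p \<le> (1 - p)^k"
    using Bernoulli_inequality[of "-p" k] assms by simp
  have e: "real (Suc k) * p - (1 - (1 - p)^Suc k) = (real k * p - (1 - (1 - p)^k)) + p * (1 - (1 - p)^k)"
    by (simp add: algebra_simps)
  have c1: "0 \<le> p * (1 - (1 - p)^k)" using assms b1 by simp
  have c2: "p * (1 - (1 - p)^k) \<le> p * (real k * p)"
    using assms b2 by (intro mult_left_mono) auto
  have c3: "(real k)^2 * p^2 + p * (real k * p) \<le> (real (Suc k))^2 * p^2"
    using assms by (simp add: power2_eq_square algebra_simps)
  show ?case using Suc e c1 c2 c3 by linarith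
qed

lemma diff_bound:
  fixes L :: "('t::finite) list set"
  assumes ne: "Ln L n \<noteq> {}" and pos: "\<And>t. \<omega> t > (0::real)"
  shows "\<bar>expected_covered L \<omega> n k - real k * alpha2 L \<omega> n\<bar>
          \<le> (real k)^2 * max_prob L \<omega> n * alpha2 L \<omega> n"
proof -
  have fin: "finite (Ln L n)" by (rule fin_Ln)
  define p where "p = (\<lambda>w. word_weight \<omega> w / Zw L \<omega> n)"
  have Zp: "Zw L \<omega> n > 0" by (rule Z_pos[OF fin ne pos])
  have wp: "\<And>w. word_weight \<omega> w > 0" using ww_pos[of \<omega>] pos by blast
  have p0: "\<And>w. p w \<ge> 0" unfolding p_def using wp Zp by (auto intro: divide_nonneg_pos less_imp_le)
  have p1: "\<And>w. w \<in> Ln L n \<Longrightarrow> p w \<le> 1" unfolding p_def using ww_le_Z[OF fin _ pos] Zp by simp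
  define mp where "mp = max_prob L \<omega> n"
  have mp: "\<And>w. w \<in> Ln L n \<Longrightarrow> p w \<le> mp"
    unfolding mp_def max_prob_def p_def by (rule Max_ge) (use fin in auto)
  have E: "expected_covered L \<omega> n k = (\<Sum>w\<in>Ln L n. p w * (1 - (1 - p w)^k))"
    unfolding p_def by (rule expected_formula[OF ne pos])
  have A: "alpha2 L \<omega> n = (\<Sum>w\<in>Ln L n. (p w)^2)" unfolding alpha2_def p_def ..
  have "expected_covered L \<omega> n k - real k * alpha2 L \<omega> n
      = (\<Sum>w\<in>Ln L n. p w * ((1 - (1 - p w)^k) - real k * p w))"
    unfolding E A by (simp add: sum_distrib_left sum_subtractf[symmetric] algebra_simps power2_eq_square)
  also have "\<bar>\<dots>\<bar> \<le> (\<Sum>w\<in>Ln L n. \<bar>p w * ((1 - (1 - p w)^k) - real k * p w)\<bar>)"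
    by (rule sum_abs)
  also have "\<dots> \<le> (\<Sum>w\<in>Ln L n. (real k)^2 * mp * (p w)^2)"
  proof (rule sum_mono)
    fix w assume w: "w \<in> Ln L n"
    have b: "\<bar>(1 - (1 - p w)^k) - real k * p w\<bar> \<le> (real k)^2 * (p w)^2"
      using bern2[OF p0 p1[OF w], of k] by linarith
    have "\<bar>p w * ((1 - (1 - p w)^k) - real k * p w)\<bar> = p w * \<bar>(1 - (1 - p w)^k) - real k * p w\<bar>"
      using p0[of w] by (simp add: abs_mult)
    also have "\<dots> \<le> p w * ((real k)^2 * (p w)^2)"
      using b p0[of w] by (intro mult_left_mono) auto
    also have "\<dots> \<le> mp * ((real k)^2 * (p w)^2)"
      using mp[OF w] by (intro mult_right_mono) auto
    finally show "\<bar>p w * ((1 - (1 - p w)^k) - real k * p w)\<bar> \<le> (real k)^2 * mp * (p w)^2"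
      by (simp add: algebra_simps)
  qed
  also have "\<dots> = (real k)^2 * max_prob L \<omega> n * alpha2 L \<omega> n"
    unfolding A mp_def by (simp add: sum_distrib_left)
  finally show ?thesis .
qed

lemma alpha2_nonneg: "alpha2 L \<omega> n \<ge> 0"
  unfolding alpha2_def by (intro sum_nonneg) auto

lemma max_prob_nonneg:
  fixes L :: "('t::finite) list set"
  assumes ne: "Ln L n \<noteq> {}" and pos: "\<And>t. \<omega> t > (0::real)"
  shows "max_prob L \<omega> n \<ge> 0"
proof -
  have fin: "finite (Ln L n)" by (rule fin_Ln)
  have Zp: "Zw L \<omega> n > 0" by (rule Z_pos[OF fin ne pos])
  have wp: "\<And>w. word_weight \<omega> w > 0" using ww_pos[of \<omega>] pos by blast
  obtain w where w: "w \<in> Ln L n" using ne by auto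
  have "0 \<le> word_weight \<omega> w / Zw L \<omega> n" using wp[of w] Zp by simp
  also have "\<dots> \<le> max_prob L \<omega> n"
    unfolding max_prob_def by (rule Max_ge) (use fin w in auto)
  finally show ?thesis .
qed

theorem theorem4:
  fixes P :: "('n \<times> ('n + 't::finite) list) set" and S :: 'n
    and \<omega> :: "'t \<Rightarrow> real"
  assumes "finite P"
    and "unambiguous P S"
    and "\<And>t. \<omega> t > 0"
  defines "L \<equiv> cfg_language P S"
  shows "(\<forall>n k. Ln L n \<noteq> {} \<longrightarrow>
            expected_covered L \<omega> n k =
              (\<Sum>i = 1..length (Wvec L \<omega> n).
                 real (Mn L \<omega> n i) * (Wn L \<omega> n i / Zw L \<omega> n) *
                 (1 - (1 - Wn L \<omega> n i / Zw L \<omega> n) ^ k)))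
       \<and> (condition_C1 L \<omega> \<longrightarrow>
            (\<exists>\<beta>::real. \<beta> > 1 \<and>
               (\<forall>k :: nat \<Rightarrow> nat. (\<lambda>n. real (k n)) \<in> o(\<lambda>n. \<beta> ^ n) \<longrightarrow>
                  (\<lambda>n. expected_covered L \<omega> n (k n) - real (k n) * alpha2 L \<omega> n)
                    \<in> O[nonempty_lengths L](\<lambda>n. real (k n) * alpha2 L \<omega> n * inverse \<beta> ^ n))))"
proof (intro conjI allI impI)
  fix n k assume ne: "Ln L n \<noteq> {}"
  show "expected_covered L \<omega> n k =
              (\<Sum>i = 1..length (Wvec L \<omega> n).
                 real (Mn L \<omega> n i) * (Wn L \<omega> n i / Zw L \<omega> n) *
                 (1 - (1 - Wn L \<omega> n i / Zw L \<omega> n) ^ k))"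
    using expected_formula[OF ne assms(3)] grouping[OF ne assms(3)] by simp
next
  assume "condition_C1 L \<omega>"
  then obtain \<beta>0 :: real where b0: "\<beta>0 > 1"
    and bo: "(\<lambda>n. max_prob L \<omega> n) \<in> O[nonempty_lengths L](\<lambda>n. inverse \<beta>0 ^ n)"
    unfolding condition_C1_def by blast
  obtain C where C: "C > 0"
    and evC: "\<forall>\<^sub>F n in nonempty_lengths L. norm (max_prob L \<omega> n) \<le> C * norm (inverse \<beta>0 ^ n)"
    using landau_o.bigE[OF bo] by blast
  define \<beta> where "\<beta> = sqrt \<beta>0"
  have b1: "\<beta> > 1" unfolding \<beta>_def using b0 by simp
  have bsq: "\<beta>0 = \<beta> * \<beta>" unfolding \<beta>_def using b0 by simp
  show "\<exists>\<beta>::real. \<beta> > 1 \<and>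
               (\<forall>k :: nat \<Rightarrow> nat. (\<lambda>n. real (k n)) \<in> o(\<lambda>n. \<beta> ^ n) \<longrightarrow>
                  (\<lambda>n. expected_covered L \<omega> n (k n) - real (k n) * alpha2 L \<omega> n)
                    \<in> O[nonempty_lengths L](\<lambda>n. real (k n) * alpha2 L \<omega> n * inverse \<beta> ^ n))"
  proof (intro exI[of _ \<beta>] conjI allI impI)
    show "\<beta> > 1" by (rule b1)
    fix k :: "nat \<Rightarrow> nat"
    assume ko: "(\<lambda>n. real (k n)) \<in> o(\<lambda>n. \<beta> ^ n)"
    have evk: "\<forall>\<^sub>F n in at_top. norm (real (k n)) \<le> 1 * norm (\<beta> ^ n)"
      by (rule landau_o.smallD[OF ko]) simp
    have evC': "\<forall>\<^sub>F n in at_top. n \<in> {n. Ln L n \<noteq> {}} \<longrightarrow> norm (max_prob L \<omega> n) \<le> C * norm (inverse \<beta>0 ^ n)"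
      using evC unfolding nonempty_lengths_def eventually_inf_principal .
    have "\<forall>\<^sub>F n in at_top. n \<in> {n. Ln L n \<noteq> {}} \<longrightarrow>
        norm (expected_covered L \<omega> n (k n) - real (k n) * alpha2 L \<omega> n)
          \<le> C * norm (real (k n) * alpha2 L \<omega> n * inverse \<beta> ^ n)"
      using evk evC'
    proof eventually_elim
      case (elim n)
      show ?case
      proof
        assume "n \<in> {n. Ln L n \<noteq> {}}"
        then have ne: "Ln L n \<noteq> {}" by simp
        define K where "K = real (k n)"
        define a where "a = alpha2 L \<omega> n"
        define m where "m = max_prob L \<omega> n"
        have K0: "K \<ge> 0" unfolding K_def by simp
        have a0: "a \<ge> 0" unfolding a_def by (rule alpha2_nonneg)
        have m0: "m \<ge> 0" unfolding m_def by (rule max_prob_nonneg[OF ne assms(3)])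
        have ib: "inverse \<beta> ^ n > 0" using b1 by simp
        have ib0: "inverse \<beta>0 ^ n = inverse \<beta> ^ n * inverse \<beta> ^ n"
          unfolding bsq by (simp add: power_mult_distrib)
        have Kb: "K \<le> \<beta> ^ n" using elim(1) b1 unfolding K_def by simp
        have mb: "m \<le> C * inverse \<beta>0 ^ n" using elim(2) ne m0 b0 unfolding m_def by simp
        have bib: "\<beta> ^ n * inverse \<beta> ^ n = 1" using b1 by (simp add: power_inverse)
        have "norm (expected_covered L \<omega> n (k n) - real (k n) * alpha2 L \<omega> n) \<le> K^2 * m * a"
          using diff_bound[OF ne assms(3), where k="k n"] unfolding K_def m_def a_def by simp
        also have "\<dots> = K * (K * m * a)" by (simp add: power2_eq_square)
        also have "\<dots> \<le> K * (\<beta> ^ n * m * a)"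
          using Kb K0 m0 a0 by (intro mult_left_mono mult_right_mono) auto
        also have "\<dots> \<le> K * (\<beta> ^ n * (C * inverse \<beta>0 ^ n) * a)"
          using mb K0 a0 b1 by (intro mult_left_mono mult_right_mono) auto
        also have "\<dots> = C * (K * a * inverse \<beta> ^ n) * (\<beta> ^ n * inverse \<beta> ^ n)"
          unfolding ib0 by (simp add: algebra_simps)
        also have "\<dots> = C * norm (real (k n) * alpha2 L \<omega> n * inverse \<beta> ^ n)"
          using bib K0 a0 ib unfolding K_def a_def by (simp add: abs_mult)
        finally show "norm (expected_covered L \<omega> n (k n) - real (k n) * alpha2 L \<omega> n)
          \<le> C * norm (real (k n) * alpha2 L \<omega> n * inverse \<beta> ^ n)" .
      qed
    qed
    then have "\<forall>\<^sub>F n in nonempty_lengths L.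
        norm (expected_covered L \<omega> n (k n) - real (k n) * alpha2 L \<omega> n)
          \<le> C * norm (real (k n) * alpha2 L \<omega> n * inverse \<beta> ^ n)"
      unfolding nonempty_lengths_def eventually_inf_principal .
    then show "(\<lambda>n. expected_covered L \<omega> n (k n) - real (k n) * alpha2 L \<omega> n)
                    \<in> O[nonempty_lengths L](\<lambda>n. real (k n) * alpha2 L \<omega> n * inverse \<beta> ^ n)"
      by (rule bigoI)
  qed
qed

end
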